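(* Let $n\ge 2$, $C>0$, let $x\in\mathcal{K}_{S+}$, and let $\tilde{x}=x+\eta$ where either $\eta$ has i.i.d. Laplace entries with mean $0$ and scale $b>0$, or $\eta\sim\mathcal{N}(0,\sigma^2I_n)$ with $\sigma>0$. Then for every pair $(i,j)$ with $x_i\le x_j$, $$\mathcal{B}(\pi_{S+})_i-\mathcal{B}(\pi_{S+})_j\le x_j-x_i.$$
   Context: Let $C>0$, $\mathcal{K}_S=\{v\in\mathbb{R}^n:\sum_i v_i=C\}$, $\mathcal{K}_{S+}=\{v\in\mathcal{K}_S:v\ge0\}$, and $\pi_{S+}(\tilde{x})=\arg\min_{v\in\mathcal{K}_{S+}}\|v-\tilde{x}\|_2$. The bias of a map $\pi:\mathbb{R}^n\to\mathbb{R}^n$ is $\mathcal{B}(\pi)=\mathbb{E}_{\tilde{x}}[\pi(\tilde{x})]-x$. *)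

theory Defs
  imports "HOL-Probability.Probability"
begin

definition K_S :: "real \<Rightarrow> ('n::finite \<Rightarrow> real) set" where
  "K_S C = {v. (\<Sum>i\<in>UNIV. v i) = C}"

definition K_Splus :: "real \<Rightarrow> ('n::finite \<Rightarrow> real) set" where
  "K_Splus C = {v \<in> K_S C. \<forall>i. 0 \<le> v i}"

definition l2dist :: "('n::finite \<Rightarrow> real) \<Rightarrow> ('n \<Rightarrow> real) \<Rightarrow> real" where
  "l2dist v w = sqrt (\<Sum>i\<in>UNIV. (v i - w i)^2)"

text \<open>Euclidean projection onto K_S+ (the arg min, unique since the set is closed, convex, nonempty).\<close>
definition proj_Splus :: "real \<Rightarrow> ('n::finite \<Rightarrow> real) \<Rightarrow> ('n \<Rightarrow> real)" where
  "proj_Splus C y = (THE v. v \<in> K_Splus C \<and> (\<forall>w\<in>K_Splus C. l2dist v y \<le> l2dist w y))"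

definition laplace_density :: "real \<Rightarrow> real \<Rightarrow> real" where
  "laplace_density b t = exp (- \<bar>t\<bar> / b) / (2 * b)"

definition laplace_noise :: "real \<Rightarrow> ('n::finite \<Rightarrow> real) measure" where
  "laplace_noise b = PiM UNIV (\<lambda>_. density lborel (laplace_density b))"

definition gaussian_noise :: "real \<Rightarrow> ('n::finite \<Rightarrow> real) measure" where
  "gaussian_noise \<sigma> = PiM UNIV (\<lambda>_. density lborel (normal_density 0 \<sigma>))"

definition bias :: "('n::finite \<Rightarrow> real) measure \<Rightarrow> (('n \<Rightarrow> real) \<Rightarrow> ('n \<Rightarrow> real))
    \<Rightarrow> ('n \<Rightarrow> real) \<Rightarrow> ('n \<Rightarrow> real)" where
  "bias M \<pi> x = (\<lambda>i. (\<integral>\<eta>. \<pi> (\<lambda>k. x k + \<eta> k) i \<partial>M) - x i)"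

end

theory Submission
  imports Defs "HOL-Analysis.Analysis"
begin

lemma prob_space_laplace:
  assumes b: "b > 0"
  shows "prob_space (density lborel (laplace_density b))"
proof (rule prob_spaceI)
  define ed where "ed = exponential_density (1/b)"
  have edm[measurable]: "ed \<in> borel_measurable borel" unfolding ed_def by simp
  have ednn: "ed t \<ge> 0" for t unfolding ed_def exponential_density_def using b by auto
  have E: "(\<integral>\<^sup>+t. ennreal (ed t) \<partial>lborel) = 1"
  proof -
    interpret prob_space "density lborel ed" unfolding ed_def using b by (intro prob_space_exponential_density) simp
    show ?thesis using emeasure_space_1 by (simp add: emeasure_density)
  qed
  have E': "(\<integral>\<^sup>+t. ennreal (ed (-t)) \<partial>lborel) = 1"
    using nn_integral_real_affine[of "\<lambda>t. ennreal (ed t)" "-1" 0] E by simp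
  have i2: "inverse 2 + inverse 2 = (1::ennreal)"
  proof -
    have "ennreal (1/2) + ennreal (1/2) = ennreal (1/2 + 1/2)" by (subst ennreal_plus) auto
    then show ?thesis by (simp add: ennreal_half)
  qed
  have "(\<integral>\<^sup>+t. ennreal (laplace_density b t) \<partial>lborel)
      = (\<integral>\<^sup>+t. ennreal (ed t) * ennreal (1/2) + ennreal (ed (-t)) * ennreal (1/2) \<partial>lborel)"
  proof (intro nn_integral_cong_AE eventually_mono[OF AE_lborel_singleton[of 0]])
    fix t :: real assume "t \<noteq> 0"
    have half: "ennreal (x/2) = ennreal x * inverse 2" if "x \<ge> 0" for x :: real
      using divide_ennreal_def ennreal_divide_numeral that by presburger
    have r: "laplace_density b t = ed t * (1/2) + ed (-t) * (1/2)"
      unfolding ed_def exponential_density_def laplace_density_def using b \<open>t \<noteq> 0\<close>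
      by (cases "t < 0") (auto simp: field_simps)
    show "ennreal (laplace_density b t) = ennreal (ed t) * ennreal (1/2) + ennreal (ed (-t)) * ennreal (1/2)"
      unfolding r using ednn[of t] ednn[of "-t"]
      by (subst ennreal_plus) (auto simp del: ennreal_plus simp: half)
  qed
  also have "\<dots> = 1"
    by (subst nn_integral_add) (auto simp: nn_integral_multc E E' i2 ennreal_plus[symmetric] simp del: ennreal_plus)
  finally show "emeasure (density lborel (laplace_density b)) (space (density lborel (laplace_density b))) = 1"
    by (simp add: emeasure_density laplace_density_def)
qed


definition VS :: "real \<Rightarrow> (real ^ 'n::finite) set" where
  "VS C = vec_lambda ` K_Splus C"

lemma vl_inv[simp]: "vec_nth (vec_lambda f) = f" by (rule ext) simp

lemma VS_eq: "VS C = {v. (\<Sum>i\<in>UNIV. v $ i) = C \<and> (\<forall>i. 0 \<le> v $ i)}"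
  unfolding VS_def K_Splus_def K_S_def
  by (auto simp: image_iff intro!: exI[of _ "vec_nth v" for v])

lemma l2dist_vec: "l2dist v w = dist (vec_lambda v) (vec_lambda w)"
  unfolding l2dist_def dist_vec_def L2_set_def by (simp add: dist_real_def)

lemma closed_VS: "closed (VS C)"
  unfolding VS_eq
  by (intro closed_Collect_conj closed_Collect_eq closed_Collect_all closed_Collect_le continuous_intros)

lemma convex_VS: "convex (VS C)"
  unfolding VS_eq convex_def
  apply (auto simp: sum.distrib sum_distrib_left[symmetric] intro!: add_nonneg_nonneg mult_nonneg_nonneg)
  by (simp add: distrib_right[symmetric])

lemma VS_ne: "K_Splus C \<noteq> ({} :: ('n::finite \<Rightarrow> real) set) \<Longrightarrow> (VS C :: (real^'n::finite) set) \<noteq> {}"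
  by (simp add: VS_def)

lemma proj_eq:
  fixes y :: "'n::finite \<Rightarrow> real"
  assumes ne: "K_Splus C \<noteq> ({} :: ('n \<Rightarrow> real) set)"
  shows "proj_Splus C y = vec_nth (closest_point (VS C) (vec_lambda y))"
proof -
  note neV = VS_ne[OF ne]
  let ?p = "closest_point (VS C) (vec_lambda y)"
  have pin: "?p \<in> VS C" using closest_point_in_set[OF closed_VS neV] .
  have pmin: "\<forall>z\<in>VS C. dist (vec_lambda y) ?p \<le> dist (vec_lambda y) z"
    using closest_point_exists(2)[OF closed_VS neV] .
  show ?thesis unfolding proj_Splus_def
  proof (rule the_equality)
    show "vec_nth ?p \<in> K_Splus C \<and> (\<forall>w\<in>K_Splus C. l2dist (vec_nth ?p) y \<le> l2dist w y)"
      using pin pmin unfolding VS_def l2dist_vec by (auto simp: dist_commute)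
  next
    fix v assume v: "v \<in> K_Splus C \<and> (\<forall>w\<in>K_Splus C. l2dist v y \<le> l2dist w y)"
    have e: "vec_lambda v = ?p"
      apply (rule closest_point_unique[OF convex_VS closed_VS])
      using v unfolding VS_def l2dist_vec by (auto simp: dist_commute)
    show "v = vec_nth ?p" using arg_cong[OF e, of vec_nth] by simp
  qed
qed

lemma proj_mono:
  fixes w y :: "'n::finite \<Rightarrow> real"
  assumes ne: "K_Splus C \<noteq> ({} :: ('n \<Rightarrow> real) set)"
  shows "(\<Sum>k\<in>UNIV. (w k - y k) * (proj_Splus C w k - proj_Splus C y k)) \<ge> 0"
proof -
  note neV = VS_ne[OF ne]
  let ?a = "vec_lambda w" and ?b = "vec_lambda y"
  let ?pa = "closest_point (VS C) ?a" and ?pb = "closest_point (VS C) ?b"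
  have 1: "inner (?a - ?pa) (?pb - ?pa) \<le> 0"
    by (rule closest_point_dot[OF convex_VS closed_VS closest_point_in_set[OF closed_VS neV]])
  have 2: "inner (?b - ?pb) (?pa - ?pb) \<le> 0"
    by (rule closest_point_dot[OF convex_VS closed_VS closest_point_in_set[OF closed_VS neV]])
  have "inner (?a - ?b) (?pa - ?pb) \<ge> inner (?pa - ?pb) (?pa - ?pb)"
    using 1 2 by (simp add: inner_diff_left inner_diff_right inner_commute algebra_simps)
  moreover have "inner (?pa - ?pb) (?pa - ?pb) \<ge> 0" by simp
  ultimately have "inner (?a - ?b) (?pa - ?pb) \<ge> 0" by linarith
  then show ?thesis unfolding proj_eq[OF ne] inner_vec_def by simp
qed

lemma proj_in:
  fixes y :: "'n::finite \<Rightarrow> real"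
  assumes ne: "K_Splus C \<noteq> ({} :: ('n \<Rightarrow> real) set)"
  shows "proj_Splus C y \<in> K_Splus C"
proof -
  note neV = VS_ne[OF ne]
  show ?thesis unfolding proj_eq[OF ne] using closest_point_in_set[OF closed_VS neV, of "vec_lambda y"]
    unfolding VS_def by auto
qed

lemma proj_bounded:
  fixes y :: "'n::finite \<Rightarrow> real"
  assumes ne: "K_Splus C \<noteq> ({} :: ('n \<Rightarrow> real) set)"
  shows "0 \<le> proj_Splus C y k \<and> proj_Splus C y k \<le> C"
proof -
  let ?p = "proj_Splus C y"
  have p: "(\<Sum>i\<in>UNIV. ?p i) = C" "\<forall>i. 0 \<le> ?p i" using proj_in[OF ne, of y] unfolding K_Splus_def K_S_def by auto
  have "?p k \<le> (\<Sum>i\<in>UNIV. ?p i)" by (rule member_le_sum) (use p in auto)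
  then show ?thesis using p by auto
qed

lemma proj_char:
  fixes y p :: "'n::finite \<Rightarrow> real"
  assumes ne: "K_Splus C \<noteq> ({} :: ('n \<Rightarrow> real) set)"
    and p: "p \<in> K_Splus C" "\<forall>w\<in>K_Splus C. l2dist p y \<le> l2dist w y"
  shows "proj_Splus C y = p"
proof -
  have e: "vec_lambda p = closest_point (VS C) (vec_lambda y)"
    apply (rule closest_point_unique[OF convex_VS closed_VS])
    using p unfolding VS_def l2dist_vec by (auto simp: dist_commute)
  show ?thesis unfolding proj_eq[OF ne] using arg_cong[OF e, of vec_nth] by simp
qed

lemma proj_min:
  fixes y w :: "'n::finite \<Rightarrow> real"
  assumes ne: "K_Splus C \<noteq> ({} :: ('n \<Rightarrow> real) set)" and w: "w \<in> K_Splus C"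
  shows "l2dist (proj_Splus C y) y \<le> l2dist w y"
proof -
  note neV = VS_ne[OF ne]
  show ?thesis unfolding proj_eq[OF ne] l2dist_vec
    using closest_point_exists(2)[OF closed_VS neV, of "vec_lambda y"] w unfolding VS_def
    by (auto simp: dist_commute)
qed

lemma perm_sum:
  fixes v :: "'n::finite \<Rightarrow> real"
  assumes b: "bij \<sigma>" shows "(\<Sum>i\<in>UNIV. (v \<circ> \<sigma>) i) = (\<Sum>i\<in>UNIV. v i)"
proof -
  have "sum v (\<sigma> ` UNIV) = sum (v \<circ> \<sigma>) UNIV" by (rule sum.reindex) (simp add: bij_is_inj[OF b])
  moreover have "\<sigma> ` UNIV = UNIV" using bij_is_surj[OF b] .
  ultimately show ?thesis by simp
qed

lemma perm_K:
  fixes v :: "'n::finite \<Rightarrow> real"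
  assumes b: "bij \<sigma>" shows "(v \<circ> \<sigma>) \<in> K_Splus C \<longleftrightarrow> v \<in> K_Splus C"
proof -
  have "(\<forall>i. 0 \<le> v (\<sigma> i)) \<longleftrightarrow> (\<forall>i. 0 \<le> v i)"
    by (metis b bij_pointE)
  then show ?thesis unfolding K_Splus_def K_S_def using perm_sum[OF b, of v] by simp
qed

lemma perm_l2:
  fixes v w :: "'n::finite \<Rightarrow> real"
  assumes b: "bij \<sigma>" shows "l2dist (v \<circ> \<sigma>) (w \<circ> \<sigma>) = l2dist v w"
  unfolding l2dist_def
  using perm_sum[OF b, of "\<lambda>i. (v i - w i)^2"] by (simp add: o_def)

lemma proj_perm:
  fixes y :: "'n::finite \<Rightarrow> real" and \<sigma> :: "'n \<Rightarrow> 'n"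
  assumes ne: "K_Splus C \<noteq> ({} :: ('n \<Rightarrow> real) set)" and b: "bij \<sigma>"
  shows "proj_Splus C (y \<circ> \<sigma>) = proj_Splus C y \<circ> \<sigma>"
proof (rule proj_char[OF ne])
  show "proj_Splus C y \<circ> \<sigma> \<in> K_Splus C" using perm_K[OF b] proj_in[OF ne] by blast
  show "\<forall>w\<in>K_Splus C. l2dist (proj_Splus C y \<circ> \<sigma>) (y \<circ> \<sigma>) \<le> l2dist w (y \<circ> \<sigma>)"
  proof
    fix w :: "'n \<Rightarrow> real" assume w: "w \<in> K_Splus C"
    have bi: "bij (inv \<sigma>)" using b by (simp add: bij_imp_bij_inv)
    have w': "w \<circ> inv \<sigma> \<in> K_Splus C" using perm_K[OF bi] w by blast
    have "l2dist (proj_Splus C y \<circ> \<sigma>) (y \<circ> \<sigma>) = l2dist (proj_Splus C y) y" by (rule perm_l2[OF b])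
    also have "\<dots> \<le> l2dist (w \<circ> inv \<sigma>) y" by (rule proj_min[OF ne w'])
    also have "\<dots> = l2dist (w \<circ> inv \<sigma> \<circ> \<sigma>) (y \<circ> \<sigma>)" by (rule perm_l2[OF b, symmetric])
    also have "w \<circ> inv \<sigma> \<circ> \<sigma> = w" using b by (simp add: o_assoc[symmetric] bij_is_inj)
    finally show "l2dist (proj_Splus C y \<circ> \<sigma>) (y \<circ> \<sigma>) \<le> l2dist w (y \<circ> \<sigma>)" .
  qed
qed

lemma proj_cont:
  fixes x :: "'n::finite \<Rightarrow> real"
  assumes ne: "K_Splus C \<noteq> ({} :: ('n \<Rightarrow> real) set)"
  shows "continuous_on UNIV (\<lambda>v::real^'n. proj_Splus C (\<lambda>k. x k + v $ k) i)"
proof -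
  note neV = VS_ne[OF ne]
  have e: "(\<lambda>v::real^'n. proj_Splus C (\<lambda>k. x k + v $ k) i) = (\<lambda>v. closest_point (VS C) (vec_lambda x + v) $ i)"
    unfolding proj_eq[OF ne] by (auto simp: plus_vec_def)
  have c1: "continuous_on UNIV (\<lambda>v. closest_point (VS C) (vec_lambda x + v))"
    by (rule continuous_on_compose2[OF continuous_on_closest_point[OF convex_VS closed_VS neV, of UNIV]])
      (auto intro: continuous_intros)
  show ?thesis unfolding e by (intro continuous_on_component c1)
qed


lemma main_gen:
  fixes x :: "'n::finite \<Rightarrow> real" and N :: "real measure" and M :: "('n \<Rightarrow> real) measure"
  assumes N: "prob_space N" "sets N = sets borel"
    and M: "M = PiM UNIV (\<lambda>_. N)"
    and x: "x \<in> K_Splus C" and xij: "x i \<le> x j"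
  shows "(\<integral>\<eta>. proj_Splus C (\<lambda>k. x k + \<eta> k) i \<partial>M) \<le> (\<integral>\<eta>. proj_Splus C (\<lambda>k. x k + \<eta> k) j \<partial>M)"
proof -
  have ne: "K_Splus C \<noteq> ({} :: ('n \<Rightarrow> real) set)" using x by auto
  interpret P: prob_space M unfolding M by (intro prob_space_PiM N(1))
  define F where "F l \<eta> = proj_Splus C (\<lambda>k. x k + \<eta> k) l" for l and \<eta> :: "'n \<Rightarrow> real"
  have comp: "(\<lambda>\<eta>. \<eta> k) \<in> borel_measurable M" for k
  proof -
    have c: "(\<lambda>\<eta>. \<eta> k) \<in> measurable (PiM UNIV (\<lambda>_. N)) N" by (rule measurable_component_singleton) simp
    have e: "measurable (PiM UNIV (\<lambda>_. N)) N = measurable (PiM UNIV (\<lambda>_. N)) borel"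
      by (rule measurable_cong_sets[OF refl N(2)])
    show ?thesis using c unfolding e M .
  qed
  have vl: "(\<lambda>\<eta>. vec_lambda \<eta> :: real^'n) \<in> borel_measurable M"
  proof (subst borel_measurable_euclidean_space, intro ballI)
    fix b :: "real^'n" assume "b \<in> Basis"
    then obtain k where b: "b = axis k 1" by (auto simp: Basis_vec_def)
    have "(\<lambda>\<eta>. vec_lambda \<eta> \<bullet> b) = (\<lambda>\<eta>. \<eta> k)" unfolding b inner_axis by simp
    then show "(\<lambda>\<eta>. vec_lambda \<eta> \<bullet> b) \<in> borel_measurable M" using comp[of k] by simp
  qed
  have Fm: "F l \<in> borel_measurable M" for l
  proof -
    have "(\<lambda>\<eta>. (\<lambda>v::real^'n. proj_Splus C (\<lambda>k. x k + v $ k) l) (vec_lambda \<eta>)) \<in> borel_measurable M"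
      by (rule measurable_compose[OF vl borel_measurable_continuous_onI[OF proj_cont[OF ne]]])
    then show ?thesis unfolding F_def by simp
  qed
  have Fb: "norm (F l \<eta>) \<le> C" for l \<eta> using proj_bounded[OF ne] unfolding F_def by auto
  define \<sigma> where "\<sigma> k = (if k = i then j else if k = j then i else k)" for k
  have ss: "\<sigma> (\<sigma> k) = k" for k unfolding \<sigma>_def by auto
  have bs: "bij \<sigma>" by (metis bijI' ss)
  define s where "s \<eta> = (\<lambda>k. \<eta> (\<sigma> k))" for \<eta> :: "'n \<Rightarrow> real"
  have sm0: "(\<lambda>\<omega>. \<lambda>n\<in>UNIV. \<omega> (\<sigma> n)) \<in> measurable (PiM UNIV (\<lambda>_. N)) (PiM UNIV (\<lambda>_. N))"
    by (rule measurable_restrict, rule measurable_component_singleton) simp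
  have sm: "s \<in> measurable M M" using sm0 unfolding s_def M restrict_UNIV .
  have ds: "distr M M s = M"
    using distr_PiM_reindex[of UNIV "\<lambda>_. N" \<sigma> UNIV] N(1) bs
    unfolding M s_def by (simp add: restrict_UNIV bij_is_inj)
  have inv: "(\<integral>\<eta>. F l (s \<eta>) \<partial>M) = (\<integral>\<eta>. F l \<eta> \<partial>M)" for l
  proof -
    have "(\<integral>\<eta>. F l \<eta> \<partial>M) = (\<integral>\<eta>. F l \<eta> \<partial>distr M M s)" by (simp add: ds)
    also have "\<dots> = (\<integral>\<eta>. F l (s \<eta>) \<partial>M)" by (rule integral_distr[OF sm Fm])
    finally show ?thesis by simp
  qed
  have int: "integrable M (F l)" for l
    by (rule P.integrable_const_bound[where B=C]) (auto simp: Fm intro!: AE_I2 Fb[unfolded real_norm_def])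
  have int2: "integrable M (\<lambda>\<eta>. F l (s \<eta>))" for l
    by (rule P.integrable_const_bound[where B=C]) (auto intro!: AE_I2 Fb[unfolded real_norm_def] measurable_compose[OF sm Fm])
  have pw: "F i \<eta> + F i (s \<eta>) \<le> F j \<eta> + F j (s \<eta>)" for \<eta>
  proof (cases "i = j")
    case True then show ?thesis by simp
  next
    case ij: False
    define y where "y = (\<lambda>k. x k + \<eta> k)"
    define w where "w = (\<lambda>k. x (\<sigma> k) + \<eta> k)"
    have weq: "(\<lambda>k. x k + \<eta> (\<sigma> k)) = w \<circ> \<sigma>" unfolding w_def o_def using ss by simp
    have e: "F l (s \<eta>) = proj_Splus C w (\<sigma> l)" for l
    proof -
      have "F l (s \<eta>) = proj_Splus C (w \<circ> \<sigma>) l" unfolding F_def s_def weq by (rule refl)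
      also have "\<dots> = proj_Splus C w (\<sigma> l)" unfolding proj_perm[OF ne bs] by simp
      finally show ?thesis .
    qed
    have si: "\<sigma> i = j" "\<sigma> j = i" unfolding \<sigma>_def by auto
    let ?g = "\<lambda>k. (w k - y k) * (proj_Splus C w k - proj_Splus C y k)"
    have "(\<Sum>k\<in>UNIV. ?g k) = (\<Sum>k\<in>{i,j}. ?g k)"
    proof (rule sum.mono_neutral_right)
      show "\<forall>k\<in>UNIV - {i, j}. ?g k = 0"
      proof
        fix k assume "k \<in> UNIV - {i, j}"
        then have "\<sigma> k = k" unfolding \<sigma>_def by auto
        then show "?g k = 0" unfolding w_def y_def by simp
      qed
    qed auto
    also have "\<dots> = ?g i + ?g j" using ij by simp
    also have "\<dots> = (x j - x i) * ((proj_Splus C w i - proj_Splus C y i) - (proj_Splus C w j - proj_Splus C y j))"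
    proof -
      have wi: "w i - y i = x j - x i" "w j - y j = x i - x j" using si by (simp_all add: w_def y_def)
      show ?thesis unfolding wi by (simp add: algebra_simps)
    qed
    finally have key: "(x j - x i) * ((proj_Splus C w i - proj_Splus C y i) - (proj_Splus C w j - proj_Splus C y j)) \<ge> 0"
      using proj_mono[OF ne, of w y] by simp
    show ?thesis
    proof (cases "x i = x j")
      case True
      have "w = y" by (rule ext) (simp add: w_def y_def \<sigma>_def True)
      then show ?thesis unfolding e si using si unfolding F_def y_def by simp
    next
      case False
      with xij have "x j - x i > 0" by simp
      with key have "(proj_Splus C w i - proj_Splus C y i) - (proj_Splus C w j - proj_Splus C y j) \<ge> 0"
        by (simp add: zero_le_mult_iff)
      then show ?thesis unfolding e si unfolding F_def y_def by simp
    qed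
  qed
  have "2 * (\<integral>\<eta>. F i \<eta> \<partial>M) = (\<integral>\<eta>. F i \<eta> + F i (s \<eta>) \<partial>M)"
    using inv[of i] by (simp add: int int2)
  also have "\<dots> \<le> (\<integral>\<eta>. F j \<eta> + F j (s \<eta>) \<partial>M)"
    by (rule integral_mono) (auto simp: int int2 pw)
  also have "\<dots> = 2 * (\<integral>\<eta>. F j \<eta> \<partial>M)"
    using inv[of j] by (simp add: int int2)
  finally show ?thesis unfolding F_def by simp
qed

theorem lemma4:
  fixes C :: real and x :: "'n::finite \<Rightarrow> real" and M :: "('n \<Rightarrow> real) measure"
    and i j :: 'n
  assumes "CARD('n) \<ge> 2"
    and "C > 0"
    and "x \<in> K_Splus C"
    and "(\<exists>b>0. M = laplace_noise b) \<or> (\<exists>\<sigma>>0. M = gaussian_noise \<sigma>)"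
    and "x i \<le> x j"
  shows "bias M (proj_Splus C) x i - bias M (proj_Splus C) x j \<le> x j - x i"
proof -
  obtain N :: "real measure" where N: "prob_space N" "sets N = sets borel" "M = PiM UNIV (\<lambda>_. N)"
  proof (cases "\<exists>b>0. M = laplace_noise b")
    case True
    then obtain b where b: "b > 0" "M = laplace_noise b" by auto
    show ?thesis
      by (rule that[of "density lborel (laplace_density b)"])
         (use b prob_space_laplace in \<open>auto simp: laplace_noise_def\<close>)
  next
    case False
    with assms(4) obtain s where s: "s > 0" "M = gaussian_noise s" by auto
    show ?thesis
      by (rule that[of "density lborel (normal_density 0 s)"])
         (use s prob_space_normal_density in \<open>auto simp: gaussian_noise_def\<close>)
  qed
  have "(\<integral>\<eta>. proj_Splus C (\<lambda>k. x k + \<eta> k) i \<partial>M) \<le> (\<integral>\<eta>. proj_Splus C (\<lambda>k. x k + \<eta> k) j \<partial>M)"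
    by (rule main_gen[OF N assms(3) assms(5)])
  then show ?thesis unfolding bias_def by simp
qed

end
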